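(* Let $N,\beta,\sigma,\gamma,\xi,\eta,D,R,\mathbf{q},\mathbf{p},C,\mathbf{y}_0$ be as follows: $N\ge1$ integer, $\beta,\sigma,\gamma,\xi,\eta,D,R>0$; for $\mathbf{y}=(\mathbf{V}_1,\dots,\mathbf{V}_N,\mathbf{X}_1,\dots,\mathbf{X}_N)\in\mathbb{R}^{4N}$, $\mathbf{q}(\mathbf{y})=(\mathbf{q}_1,\mathbf{q}_2)$ with $q_{1,ik}=\frac{\beta}{N}\sum_{j}\frac{V_{jk}-V_{ik}}{(1+\|\mathbf{X}_j-\mathbf{X}_i\|^2/R^2)^{\sigma}}$, $q_{2,ik}=V_{ik}$ ($k=1,2$); for $r>0$, $\mathbf{p}(r,\mathbf{y},\mathbf{z})=(\mathbf{p}_1,0)$ with $p_{1,i1}=\sum_{j}\int_{-R}^{R}e^{-\frac{(X_{i2}-Z_{j2}-w)^2}{4rD}}\big(e^{-\frac{(X_{i1}-Z_{j1}-\sqrt{R^2-w^2})^2}{4rD}}-e^{-\frac{(X_{i1}-Z_{j1}+\sqrt{R^2-w^2})^2}{4rD}}\big)dw$ and $p_{1,i2}$ defined likewise with the indices $1$ and $2$ of the position components interchanged (here $X_{ik}$, $Z_{ik}$ are the position components of $\mathbf{y}$, $\mathbf{z}$); $C(r)=\frac{\gamma\xi e^{-\eta r}}{4\pi rD}$; $\mathbf{y}_0\in\mathbb{R}^{4N}$. Consider $$\mathbf{y}(t)=\mathbf{y}_0+\int_0^t\Big[\mathbf{q}(\mathbf{y}(\tau))+\int_\tau^t C(s-\tau)\,\mathbf{p}(s-\tau,\mathbf{y}(s),\mathbf{y}(\tau))\,ds\Big]d\tau.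 \tag{E}$$ Let $\mathbf{y}(t)$ be a solution of (E) on an interval $[0,T)$. If there is a constant $P$ with $\|\mathbf{y}(t)-\mathbf{y}_0\|\le P$ for all $t\in[0,T)$, then there is $\bar T>T$ such that $\mathbf{y}$ can be continued to a solution of (E) on $[0,\bar T]$.
   Context: Equation (E) is the integrated form of a hybrid model of $N$ particles in $\mathbb{R}^2$ with Cucker–Smale alignment and chemotaxis towards a diffusing, degrading signal produced on discs of radius $R$ around the particles (initially zero). $\|\cdot\|$ is the Euclidean norm. *)

theory Defs
  imports "HOL-Analysis.Analysis"
begin

text \<open>State y = (V, X) with V = (V_1,...,V_N), X = (X_1,...,X_N), each V_i, X_i in R^2.
  Particles are indexed by a finite type 'n, so N = CARD('n) >= 1.  The norm on
  the product type is sqrt(norm V ^ 2 + norm X ^ 2), i.e. the Euclidean norm of R^(4N).\<close>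

type_synonym 'n state = "(real^2^'n) \<times> (real^2^'n)"

definition qE :: "real \<Rightarrow> real \<Rightarrow> real \<Rightarrow> 'n::finite state \<Rightarrow> 'n state" where
  "qE \<beta> \<sigma> R y =
     ((\<chi> i. (\<beta> / real CARD('n)) *\<^sub>R
          (\<Sum>j\<in>UNIV. (1 / (1 + (norm (snd y $ j - snd y $ i))^2 / R^2) powr \<sigma>)
                        *\<^sub>R (fst y $ j - fst y $ i))),
      fst y)"

definition pcomp :: "real \<Rightarrow> real \<Rightarrow> real \<Rightarrow> real \<Rightarrow> real \<Rightarrow> real" where
  "pcomp D R r a b = integral {-R..R} (\<lambda>w.
      exp (- ((b - w)^2 / (4 * r * D))) *
      (exp (- ((a - sqrt (R^2 - w^2))^2 / (4 * r * D)))
       - exp (- ((a + sqrt (R^2 - w^2))^2 / (4 * r * D)))))"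

definition pE :: "real \<Rightarrow> real \<Rightarrow> real \<Rightarrow> 'n::finite state \<Rightarrow> 'n state \<Rightarrow> 'n state" where
  "pE D R r y z =
     ((\<chi> i. \<chi> k. \<Sum>j\<in>UNIV.
         (if k = 1 then pcomp D R r ((snd y $ i - snd z $ j) $ 1) ((snd y $ i - snd z $ j) $ 2)
          else pcomp D R r ((snd y $ i - snd z $ j) $ 2) ((snd y $ i - snd z $ j) $ 1))),
      0)"

definition CE :: "real \<Rightarrow> real \<Rightarrow> real \<Rightarrow> real \<Rightarrow> real \<Rightarrow> real" where
  "CE \<gamma> \<xi> \<eta> D r = \<gamma> * \<xi> * exp (- \<eta> * r) / (4 * pi * r * D)"

definition solves_E ::
  "real \<Rightarrow> real \<Rightarrow> real \<Rightarrow> real \<Rightarrow> real \<Rightarrow> real \<Rightarrow> real \<Rightarrow>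
   'n::finite state \<Rightarrow> (real \<Rightarrow> 'n state) \<Rightarrow> real set \<Rightarrow> bool" where
  "solves_E \<beta> \<sigma> \<gamma> \<xi> \<eta> D R y0 y I \<longleftrightarrow>
     continuous_on I y \<and>
     (\<forall>t\<in>I.
        (\<forall>\<tau>\<in>{0..t}. (\<lambda>s. CE \<gamma> \<xi> \<eta> D (s - \<tau>) *\<^sub>R pE D R (s - \<tau>) (y s) (y \<tau>))
                        integrable_on {\<tau>..t}) \<and>
        ((\<lambda>\<tau>. qE \<beta> \<sigma> R (y \<tau>) +
               integral {\<tau>..t} (\<lambda>s. CE \<gamma> \<xi> \<eta> D (s - \<tau>) *\<^sub>R pE D R (s - \<tau>) (y s) (y \<tau>)))
          has_integral (y t - y0)) {0..t})"

end

theory Submission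
  imports Defs "HOL-Complex_Analysis.Great_Picard"
begin
lemma sqrt_kernel_has_integral:
  fixes a b :: real assumes "a \<le> b"
  shows "((\<lambda>s. 1 / sqrt (s - a)) has_integral 2 * sqrt (b - a)) {a..b}"
proof -
  have "((\<lambda>s. 1 / sqrt (s - a)) has_integral (2 * sqrt (b - a) - 2 * sqrt (a - a))) {a..b}"
  proof (rule fundamental_theorem_of_calculus_interior[OF assms])
    show "continuous_on {a..b} (\<lambda>s. 2 * sqrt (s - a))" by (intro continuous_intros)
    fix x assume x: "x \<in> {a<..<b}"
    have "((\<lambda>s. 2 * sqrt (s - a)) has_real_derivative 2 * (inverse (sqrt (x - a)) / 2 * 1)) (at x)"
      using x by (auto intro!: derivative_eq_intros)
    then show "((\<lambda>s. 2 * sqrt (s - a)) has_vector_derivative 1 / sqrt (x - a)) (at x)"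
      by (simp add: has_real_derivative_iff_has_vector_derivative[symmetric] field_simps)
  qed
  then show ?thesis by simp
qed

locale volt =
  fixes q :: "'a::euclidean_space \<Rightarrow> 'a" and K :: "real \<Rightarrow> 'a \<Rightarrow> 'a \<Rightarrow> 'a" and M :: real
  assumes q_cont: "continuous_on UNIV q"
    and K_cont: "continuous_on ({0<..} \<times> UNIV) (\<lambda>(r, x, z). K r x z)"
    and K_bound: "\<And>r x z. r \<ge> 0 \<Longrightarrow> norm (K r x z) \<le> M / sqrt r"
    and M_nonneg: "M \<ge> 0"
begin

definition "I w \<tau> t = integral {\<tau>..t} (\<lambda>s. K (s - \<tau>) (w s) (w \<tau>))"
definition "Phi y0 w t = y0 + integral {0..t} (\<lambda>\<tau>. q (w \<tau>) + I w \<tau> t)"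

lemma K_comp:
  assumes "continuous_on S r" "continuous_on S x" "continuous_on S z" "\<And>s. s \<in> S \<Longrightarrow> r s > 0"
  shows "continuous_on S (\<lambda>s. K (r s) (x s) (z s))"
proof -
  have "continuous_on S (\<lambda>s. (\<lambda>(r, x, z). K r x z) (r s, x s, z s))"
    by (rule continuous_on_compose2[OF K_cont]) (use assms in \<open>auto intro!: continuous_intros\<close>)
  then show ?thesis by simp
qed

lemma K_tendsto:
  assumes "r > 0" "(X \<longlongrightarrow> x) F" "(Z \<longlongrightarrow> z) F"
  shows "((\<lambda>n. K r (X n) (Z n)) \<longlongrightarrow> K r x z) F"
proof -
  have "open ({0::real<..} \<times> (UNIV::('a\<times>'a) set))" by (intro open_Times open_greaterThan open_UNIV)
  then have "\<forall>p\<in>{0<..} \<times> (UNIV::('a\<times>'a) set). isCont (\<lambda>(r, x, z). K r x z) p"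
    using K_cont continuous_on_eq_continuous_at by blast
  then have "isCont (\<lambda>(r, x, z). K r x z) (r, x, z)" using assms(1) by auto
  then have "((\<lambda>n. (\<lambda>(r, x, z). K r x z) (r, X n, Z n)) \<longlongrightarrow> (\<lambda>(r, x, z). K r x z) (r, x, z)) F"
    by (rule isCont_tendsto_compose) (use assms in \<open>auto intro!: tendsto_intros\<close>)
  then show ?thesis by simp
qed

lemma kernel_integrable:
  assumes "a \<le> b" "M' \<ge> 0"
  shows "(\<lambda>s. M' / sqrt (s - a)) integrable_on {a..b}"
    "integral {a..b} (\<lambda>s. M' / sqrt (s - a)) = 2 * M' * sqrt (b - a)"
proof -
  have "((\<lambda>s. M' * (1 / sqrt (s - a))) has_integral M' * (2 * sqrt (b - a))) {a..b}"
    by (intro has_integral_mult_right sqrt_kernel_has_integral assms)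
  moreover have "(\<lambda>s. M' * (1 / sqrt (s - a))) = (\<lambda>s. M' / sqrt (s - a))" by auto
  moreover have "M' * (2 * sqrt (b - a)) = 2 * M' * sqrt (b - a)" by simp
  ultimately have h: "((\<lambda>s. M' / sqrt (s - a)) has_integral 2 * M' * sqrt (b - a)) {a..b}"
    by metis
  then show "(\<lambda>s. M' / sqrt (s - a)) integrable_on {a..b}" by blast
  show "integral {a..b} (\<lambda>s. M' / sqrt (s - a)) = 2 * M' * sqrt (b - a)"
    using h by (rule integral_unique)
qed

lemma open_closed_int:
  fixes f :: "real \<Rightarrow> 'b::euclidean_space"
  shows "f integrable_on {a<..b} \<longleftrightarrow> f integrable_on {a..b}"
    and "integral {a<..b} f = integral {a..b} f"
proof -
  have n1: "negligible {x \<in> {a<..b} - {a..b}. f x \<noteq> 0}"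
    by (rule negligible_subset[of "{}"]) auto
  have n2: "negligible {x \<in> {a..b} - {a<..b}. f x \<noteq> 0}"
    by (rule negligible_subset[of "{a}"]) auto
  show "f integrable_on {a<..b} \<longleftrightarrow> f integrable_on {a..b}"
    using integrable_spike_set[OF _ n1 n2] integrable_spike_set[OF _ n2 n1] by blast
  show "integral {a<..b} f = integral {a..b} f"
    by (rule integral_spike_set[OF n1 n2])
qed

lemma inner_integrable:
  assumes w: "continuous_on {\<tau>..t} w" and "\<tau> \<le> t"
  shows "(\<lambda>s. K (s - \<tau>) (w s) (w \<tau>)) integrable_on {\<tau>..t}"
proof -
  have c: "continuous_on {\<tau><..t} (\<lambda>s. K (s - \<tau>) (w s) (w \<tau>))"
    by (rule K_comp) (use w in \<open>auto intro!: continuous_intros intro: continuous_on_subset\<close>)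
  have "(\<lambda>s. K (s - \<tau>) (w s) (w \<tau>)) integrable_on {\<tau><..t}"
  proof (rule measurable_bounded_by_integrable_imp_integrable)
    show "(\<lambda>s. K (s - \<tau>) (w s) (w \<tau>)) \<in> borel_measurable (lebesgue_on {\<tau><..t})"
      by (rule continuous_imp_measurable_on_sets_lebesgue[OF c]) auto
    show "(\<lambda>s. M / sqrt (s - \<tau>)) integrable_on {\<tau><..t}"
      using kernel_integrable(1)[OF assms(2) M_nonneg] open_closed_int(1) by blast
    show "norm (K (s - \<tau>) (w s) (w \<tau>)) \<le> M / sqrt (s - \<tau>)" if "s \<in> {\<tau><..t}" for s
      using K_bound that by auto
  qed auto
  then show ?thesis using open_closed_int(1) by blast
qed

lemma inner_bound:
  assumes w: "continuous_on {\<tau>..b} w" and "\<tau> \<le> a" "a \<le> b"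
  shows "norm (integral {a..b} (\<lambda>s. K (s - \<tau>) (w s) (w \<tau>))) \<le> 2 * M * sqrt (b - a)"
proof -
  have int: "(\<lambda>s. K (s - \<tau>) (w s) (w \<tau>)) integrable_on {a..b}"
    using inner_integrable[OF w] assms by (auto intro: integrable_on_subinterval)
  have "norm (integral {a<..b} (\<lambda>s. K (s - \<tau>) (w s) (w \<tau>))) \<le> integral {a<..b} (\<lambda>s. M / sqrt (s - a))"
  proof (rule integral_norm_bound_integral)
    show "(\<lambda>s. K (s - \<tau>) (w s) (w \<tau>)) integrable_on {a<..b}" using int open_closed_int(1) by blast
    show "(\<lambda>s. M / sqrt (s - a)) integrable_on {a<..b}"
      using kernel_integrable(1)[OF assms(3) M_nonneg] open_closed_int(1) by blast
    fix s assume s: "s \<in> {a<..b}"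
    have "norm (K (s - \<tau>) (w s) (w \<tau>)) \<le> M / sqrt (s - \<tau>)" using K_bound s assms by auto
    also have "\<dots> \<le> M / sqrt (s - a)"
      using s assms M_nonneg by (auto intro!: divide_left_mono mult_pos_pos)
    finally show "norm (K (s - \<tau>) (w s) (w \<tau>)) \<le> M / sqrt (s - a)" .
  qed
  then show ?thesis using open_closed_int(2) kernel_integrable(2)[OF assms(3) M_nonneg] by metis
qed

end

context volt begin

lemma K_zero: "K 0 x z = 0"
  using K_bound[of 0 x z] by simp

lemma I_shift:
  assumes "0 \<le> \<tau>" "\<tau> \<le> t"
  shows "I w \<tau> t = integral {0..t} (\<lambda>r. if r \<in> {0..t-\<tau>} then K r (w (\<tau> + r)) (w \<tau>) else 0)"
proof -
  have "integral {0..t-\<tau>} ((\<lambda>s. K (s - \<tau>) (w s) (w \<tau>)) \<circ> (+) \<tau>)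
        = integral {0+\<tau>..t-\<tau>+\<tau>} (\<lambda>s. K (s - \<tau>) (w s) (w \<tau>))"
    by (rule integral_shift_Icc_real)
  then have "I w \<tau> t = integral {0..t-\<tau>} (\<lambda>r. K r (w (\<tau> + r)) (w \<tau>))"
    by (simp add: I_def o_def)
  also have "\<dots> = integral {0..t} (\<lambda>r. if r \<in> {0..t-\<tau>} then K r (w (\<tau> + r)) (w \<tau>) else 0)"
    using integral_restrict_Int[of "{0..t}" "{0..t-\<tau>}" "\<lambda>r. K r (w (\<tau> + r)) (w \<tau>)"] assms
    by (simp add: Int_absorb2)
  finally show ?thesis .
qed

lemma shifted_integrable:
  assumes w: "continuous_on {0..t} w" and "0 \<le> \<tau>" "\<tau> \<le> t"
  shows "(\<lambda>r. if r \<in> {0..t-\<tau>} then K r (w (\<tau> + r)) (w \<tau>) else 0) integrable_on {0..t}"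
proof -
  have "(\<lambda>s. K (s - \<tau>) (w s) (w \<tau>)) integrable_on {\<tau>..t}"
    by (rule inner_integrable) (use w assms in \<open>auto intro: continuous_on_subset\<close>)
  then have "((\<lambda>s. K (s - \<tau>) (w s) (w \<tau>)) \<circ> (+) \<tau>) integrable_on {0..t-\<tau>}"
    using integrable_on_shift_Icc_real[of "\<lambda>s. K (s - \<tau>) (w s) (w \<tau>)" \<tau> 0 "t-\<tau>"] by simp
  then have "(\<lambda>r. K r (w (\<tau> + r)) (w \<tau>)) integrable_on {0..t-\<tau>}" by (simp add: o_def)
  then have "(\<lambda>r. K r (w (\<tau> + r)) (w \<tau>)) integrable_on ({0..t-\<tau>} \<inter> {0..t})"
    using assms by (simp add: Int_absorb2)
  then show ?thesis
    using integrable_restrict_Int[of "{0..t-\<tau>}" "\<lambda>r. K r (w (\<tau> + r)) (w \<tau>)" "{0..t}"] by simp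
qed

lemma I_cont:
  assumes w: "continuous_on {0..t} w"
  shows "continuous_on {0..t} (\<lambda>\<tau>. I w \<tau> t)"
proof (rule continuous_on_sequentiallyI)
  fix u a assume u: "\<forall>n. u n \<in> {0..t}" and a: "a \<in> {0..t}" and ua: "u \<longlonglongrightarrow> a"
  define G where "G \<tau> r = (if r \<in> {0..t-\<tau>} then K r (w (\<tau> + r)) (w \<tau>) else 0)" for \<tau> r
  define S where "S = {0..t} - {t - a}"
  have negS: "negligible {x \<in> {0..t} - S. f x \<noteq> 0}" "negligible {x \<in> S - {0..t}. f x \<noteq> 0}"
    for f :: "real \<Rightarrow> 'b::zero"
    unfolding S_def by (rule negligible_subset[of "{t-a}"]; auto)+
  have eqI: "I w \<tau> t = integral S (G \<tau>)" if "\<tau> \<in> {0..t}" for \<tau>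
    using I_shift[of \<tau> t w] that integral_spike_set[OF negS(1,2)] unfolding G_def by auto
  have intG: "G \<tau> integrable_on S" if "\<tau> \<in> {0..t}" for \<tau>
    using shifted_integrable[OF w, of \<tau>] that integrable_spike_set[OF _ negS(1,2)] unfolding G_def by auto
  have h: "(\<lambda>r. M / sqrt r) integrable_on S"
    using kernel_integrable(1)[of 0 t M] M_nonneg a integrable_spike_set[OF _ negS(1,2)] by auto
  have bound: "norm (G \<tau> r) \<le> M / sqrt r" if "r \<in> S" for \<tau> r
    using K_bound[of r] M_nonneg that unfolding G_def S_def by auto
  have conv: "(\<lambda>n. G (u n) r) \<longlonglongrightarrow> G a r" if r: "r \<in> S" for r
  proof (cases "r < t - a")
    case True
    then have ev: "eventually (\<lambda>n. r < t - u n) sequentially"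
      using ua by (auto intro!: order_tendstoD tendsto_intros)
    have lim: "(\<lambda>n. K r (w (u n + r)) (w (u n))) \<longlonglongrightarrow> K r (w (a + r)) (w a)"
    proof (cases "r = 0")
      case True then show ?thesis by (simp add: K_zero)
    next
      case False
      then have rpos: "r > 0" using r unfolding S_def by auto
      have c1: "continuous (at (a + r) within {0..t}) w"
        using w a True r unfolding S_def by (auto simp: continuous_on_eq_continuous_within)
      have c2: "continuous (at a within {0..t}) w"
        using w a by (auto simp: continuous_on_eq_continuous_within)
      show ?thesis
      proof (rule K_tendsto[OF rpos])
        show "(\<lambda>n. w (u n + r)) \<longlonglongrightarrow> w (a + r)"
          by (rule continuous_within_tendsto_compose[OF c1])
             (use ev u rpos r in \<open>auto simp: S_def elim!: eventually_mono intro!: tendsto_intros ua\<close>)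
        show "(\<lambda>n. w (u n)) \<longlonglongrightarrow> w a"
          by (rule continuous_within_tendsto_compose'[OF c2 u[rule_format] ua])
      qed
    qed
    have "eventually (\<lambda>n. G (u n) r = K r (w (u n + r)) (w (u n))) sequentially"
      using ev r unfolding G_def S_def by (auto elim!: eventually_mono simp: add.commute)
    moreover have "G a r = K r (w (a + r)) (w a)"
      using True r unfolding G_def S_def by (auto simp: add.commute)
    ultimately show ?thesis using lim by (simp add: tendsto_cong)
  next
    case False
    then have "r > t - a" using r unfolding S_def by auto
    then have ev: "eventually (\<lambda>n. r > t - u n) sequentially"
      using ua by (auto intro!: order_tendstoD tendsto_intros)
    have "eventually (\<lambda>n. G (u n) r = 0) sequentially"
      using ev unfolding G_def by (auto elim!: eventually_mono)
    moreover have "G a r = 0" using \<open>r > t - a\<close> unfolding G_def by auto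
    ultimately show ?thesis by (simp add: tendsto_cong)
  qed
  have "(\<lambda>n. integral S (G (u n))) \<longlonglongrightarrow> integral S (G a)"
    by (rule dominated_convergence(2)[OF intG[OF u[rule_format]] h bound conv])
  then show "(\<lambda>n. I w (u n) t) \<longlonglongrightarrow> I w a t"
    using eqI u a by simp
qed

lemma outer_cont:
  assumes w: "continuous_on {0..t} w"
  shows "continuous_on {0..t} (\<lambda>\<tau>. q (w \<tau>) + I w \<tau> t)"
  by (intro continuous_on_add I_cont w continuous_on_compose2[OF q_cont w]) auto

end

definition om :: "real \<Rightarrow> real \<Rightarrow> real \<Rightarrow> real" where "om A B d = A * d + B * sqrt d"

lemma om_mono: "A \<ge> 0 \<Longrightarrow> B \<ge> 0 \<Longrightarrow> 0 \<le> d \<Longrightarrow> d \<le> d' \<Longrightarrow> om A B d \<le> om A B d'"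
  unfolding om_def by (intro add_mono mult_left_mono) auto

lemma om_nonneg: "A \<ge> 0 \<Longrightarrow> B \<ge> 0 \<Longrightarrow> 0 \<le> d \<Longrightarrow> 0 \<le> om A B d"
  unfolding om_def by auto

lemma om_small:
  assumes "e > 0"
  shows "\<exists>d>0. \<forall>x. 0 \<le> x \<longrightarrow> x < d \<longrightarrow> om A B x < e"
proof -
  have "((\<lambda>x. A * x + B * sqrt x) \<longlongrightarrow> A * 0 + B * sqrt 0) (at 0)"
    by (intro tendsto_intros)
  then have "((\<lambda>x. om A B x) \<longlongrightarrow> 0) (at 0)" by (simp add: om_def)
  then obtain d where d: "d > 0" "\<And>x. x \<noteq> 0 \<Longrightarrow> dist x 0 < d \<Longrightarrow> dist (om A B x) 0 < e"
    using assms unfolding tendsto_iff eventually_at by blast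
  show ?thesis
  proof (intro exI[of _ d] conjI allI impI)
    fix x :: real assume "0 \<le> x" "x < d"
    show "om A B x < e"
    proof (cases "x = 0")
      case True then show ?thesis using assms by (simp add: om_def)
    next
      case False then show ?thesis using d(2)[of x] \<open>0 \<le> x\<close> \<open>x < d\<close> by auto
    qed
  qed (use d in auto)
qed

lemma mod_ucont:
  fixes f :: "real \<Rightarrow> 'a::real_normed_vector"
  assumes "\<And>t1 t2. t1 \<in> S \<Longrightarrow> t2 \<in> S \<Longrightarrow> t1 \<le> t2 \<Longrightarrow> norm (f t2 - f t1) \<le> om A B (t2 - t1)"
  shows "uniformly_continuous_on S f"
  unfolding uniformly_continuous_on_def
proof (intro allI impI)
  fix e :: real assume "e > 0"
  then obtain d where d: "d > 0" "\<And>x. 0 \<le> x \<Longrightarrow> x < d \<Longrightarrow> om A B x < e" using om_small by blast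
  show "\<exists>d>0. \<forall>x\<in>S. \<forall>x'\<in>S. dist x' x < d \<longrightarrow> dist (f x') (f x) < e"
  proof (intro exI[of _ d] conjI ballI impI)
    fix x x' assume xs: "x \<in> S" "x' \<in> S" and dx: "dist x' x < d"
    show "dist (f x') (f x) < e"
    proof (cases "x \<le> x'")
      case True
      then show ?thesis using assms[OF xs True] d(2)[of "x' - x"] dx
        by (auto simp: dist_norm)
    next
      case False
      then show ?thesis using assms[OF xs(2,1)] d(2)[of "x - x'"] dx
        by (auto simp: dist_norm norm_minus_commute)
    qed
  qed (use d in auto)
qed

lemma int_bound:
  fixes f :: "real \<Rightarrow> 'a::euclidean_space"
  assumes "f integrable_on {a..b}" "a \<le> b" "\<And>x. x \<in> {a..b} \<Longrightarrow> norm (f x) \<le> B"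
  shows "norm (integral {a..b} f) \<le> B * (b - a)"
proof -
  have "norm (integral {a..b} f) \<le> integral {a..b} (\<lambda>x. B)"
    by (rule integral_norm_bound_integral) (use assms in auto)
  then show ?thesis using assms(2) by (simp add: mult.commute)
qed

context volt begin

lemma F_int:
  assumes w: "continuous_on {0..t} w"
  shows "(\<lambda>\<tau>. q (w \<tau>) + I w \<tau> t) integrable_on {0..t}"
  using integrable_continuous_interval[OF outer_cont[OF w]] .

lemma F_bound:
  assumes w: "continuous_on {0..t} w" and Q: "\<And>\<tau>. \<tau> \<in> {0..t} \<Longrightarrow> norm (q (w \<tau>)) \<le> Q"
    and "\<tau> \<in> {0..t}" "t \<le> Tm"
  shows "norm (q (w \<tau>) + I w \<tau> t) \<le> Q + 2 * M * sqrt Tm"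
proof -
  have "norm (I w \<tau> t) \<le> 2 * M * sqrt (t - \<tau>)"
    unfolding I_def by (rule inner_bound) (use w assms in \<open>auto intro: continuous_on_subset\<close>)
  also have "\<dots> \<le> 2 * M * sqrt Tm" using assms M_nonneg by (auto intro!: mult_left_mono)
  finally show ?thesis using Q[OF assms(3)] norm_triangle_ineq[of "q (w \<tau>)" "I w \<tau> t"] by linarith
qed

lemma Phi_modulus:
  assumes w: "continuous_on {0..Tm} w" and Q: "\<And>\<tau>. \<tau> \<in> {0..Tm} \<Longrightarrow> norm (q (w \<tau>)) \<le> Q"
    and t: "0 \<le> t1" "t1 \<le> t2" "t2 \<le> Tm"
  shows "norm (Phi y0 w t2 - Phi y0 w t1) \<le> om (Q + 2 * M * sqrt Tm) (2 * M * Tm) (t2 - t1)"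
proof -
  define F where "F t \<tau> = q (w \<tau>) + I w \<tau> t" for t \<tau>
  have w2: "continuous_on {0..t2} w" and w1: "continuous_on {0..t1} w"
    using w t by (auto intro: continuous_on_subset)
  have i2: "F t2 integrable_on {0..t2}" using F_int[OF w2] unfolding F_def .
  have i1: "F t1 integrable_on {0..t1}" using F_int[OF w1] unfolding F_def .
  have i21: "F t2 integrable_on {0..t1}" using i2 t by (auto intro: integrable_on_subinterval)
  have i22: "F t2 integrable_on {t1..t2}" using i2 t by (auto intro: integrable_on_subinterval)
  have split: "integral {0..t2} (F t2) = integral {0..t1} (F t2) + integral {t1..t2} (F t2)"
    using Henstock_Kurzweil_Integration.integral_combine[OF t(1,2) i2] by simp
  have diffeq: "F t2 \<tau> - F t1 \<tau> = integral {t1..t2} (\<lambda>s. K (s - \<tau>) (w s) (w \<tau>))"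
    if "\<tau> \<in> {0..t1}" for \<tau>
  proof -
    have "(\<lambda>s. K (s - \<tau>) (w s) (w \<tau>)) integrable_on {\<tau>..t2}"
      by (rule inner_integrable) (use w that t in \<open>auto intro: continuous_on_subset\<close>)
    then have "integral {\<tau>..t1} (\<lambda>s. K (s - \<tau>) (w s) (w \<tau>)) + integral {t1..t2} (\<lambda>s. K (s - \<tau>) (w s) (w \<tau>))
        = integral {\<tau>..t2} (\<lambda>s. K (s - \<tau>) (w s) (w \<tau>))"
      using Henstock_Kurzweil_Integration.integral_combine that t by auto
    then show ?thesis unfolding F_def I_def by (simp add: algebra_simps)
  qed
  have b1: "norm (integral {0..t1} (\<lambda>\<tau>. F t2 \<tau> - F t1 \<tau>)) \<le> (2 * M * sqrt (t2 - t1)) * (t1 - 0)"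
  proof (rule int_bound)
    show "(\<lambda>\<tau>. F t2 \<tau> - F t1 \<tau>) integrable_on {0..t1}" by (intro integrable_diff i21 i1)
    fix \<tau> assume "\<tau> \<in> {0..t1}"
    then show "norm (F t2 \<tau> - F t1 \<tau>) \<le> 2 * M * sqrt (t2 - t1)"
    proof -
      assume tau: "\<tau> \<in> {0..t1}"
      have "continuous_on {\<tau>..t2} w" using continuous_on_subset[OF w, of "{\<tau>..t2}"] tau t by auto
      then show ?thesis using diffeq[OF tau] inner_bound[of \<tau> t2 w t1] tau t by auto
    qed
  qed (use t in auto)
  have b2: "norm (integral {t1..t2} (F t2)) \<le> (Q + 2 * M * sqrt Tm) * (t2 - t1)"
  proof (rule int_bound[OF i22 t(2)])
    fix \<tau> assume "\<tau> \<in> {t1..t2}"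
    then show "norm (F t2 \<tau>) \<le> Q + 2 * M * sqrt Tm"
      unfolding F_def using F_bound[OF w2, of Q \<tau> Tm] Q t by auto
  qed
  have "Phi y0 w t2 - Phi y0 w t1 = integral {0..t1} (\<lambda>\<tau>. F t2 \<tau> - F t1 \<tau>) + integral {t1..t2} (F t2)"
    unfolding Phi_def F_def[symmetric] using split integral_diff[OF i21 i1] by simp
  then have "norm (Phi y0 w t2 - Phi y0 w t1) \<le> (2 * M * sqrt (t2 - t1)) * t1 + (Q + 2 * M * sqrt Tm) * (t2 - t1)"
    using b1 b2 norm_triangle_ineq[of "integral {0..t1} (\<lambda>\<tau>. F t2 \<tau> - F t1 \<tau>)" "integral {t1..t2} (F t2)"]
    by simp
  also have "\<dots> \<le> om (Q + 2 * M * sqrt Tm) (2 * M * Tm) (t2 - t1)"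
  proof -
    have "t1 * sqrt (t2 - t1) \<le> Tm * sqrt (t2 - t1)" using t by (intro mult_right_mono) auto
    then have "2 * M * (t1 * sqrt (t2 - t1)) \<le> 2 * M * (Tm * sqrt (t2 - t1))"
      using M_nonneg by (intro mult_left_mono) auto
    then show ?thesis unfolding om_def by (simp add: algebra_simps)
  qed
  finally show ?thesis .
qed

lemma Phi_dep:
  assumes "\<And>\<tau>. \<tau> \<in> {0..t} \<Longrightarrow> w1 \<tau> = w2 \<tau>"
  shows "Phi y0 w1 t = Phi y0 w2 t"
proof -
  have "I w1 \<tau> t = I w2 \<tau> t" if "\<tau> \<in> {0..t}" for \<tau>
    unfolding I_def using assms that by (intro integral_cong) auto
  then show ?thesis unfolding Phi_def using assms by (auto intro!: integral_cong arg_cong[where f="(+) y0"])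
qed

lemma Phi_tendsto:
  assumes wn: "\<And>n. continuous_on {0..t} (w n)" and wl: "continuous_on {0..t} wl"
    and conv: "\<And>\<tau>. \<tau> \<in> {0..t} \<Longrightarrow> (\<lambda>n. w n \<tau>) \<longlonglongrightarrow> wl \<tau>"
    and Q: "\<And>n \<tau>. \<tau> \<in> {0..t} \<Longrightarrow> norm (q (w n \<tau>)) \<le> Q"
  shows "(\<lambda>n. Phi y0 (w n) t) \<longlonglongrightarrow> Phi y0 wl t"
proof -
  have qc: "isCont q x" for x using q_cont by (simp add: continuous_on_eq_continuous_at)
  have Iconv: "(\<lambda>n. I (w n) \<tau> t) \<longlonglongrightarrow> I wl \<tau> t" if \<tau>: "\<tau> \<in> {0..t}" for \<tau>
    unfolding I_def
  proof (rule dominated_convergence(2))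
    show "(\<lambda>s. K (s - \<tau>) (w n s) (w n \<tau>)) integrable_on {\<tau>..t}" for n
      by (rule inner_integrable) (use continuous_on_subset[OF wn[of n], of "{\<tau>..t}"] \<tau> in auto)
    show "(\<lambda>s. M / sqrt (s - \<tau>)) integrable_on {\<tau>..t}"
      using kernel_integrable(1) \<tau> M_nonneg by auto
    show "norm (K (s - \<tau>) (w n s) (w n \<tau>)) \<le> M / sqrt (s - \<tau>)" if "s \<in> {\<tau>..t}" for n s
      using K_bound that by auto
    show "(\<lambda>n. K (s - \<tau>) (w n s) (w n \<tau>)) \<longlonglongrightarrow> K (s - \<tau>) (wl s) (wl \<tau>)" if s: "s \<in> {\<tau>..t}" for s
    proof (cases "s = \<tau>")
      case True then show ?thesis by (simp add: K_zero)
    next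
      case False
      then show ?thesis using s \<tau> by (intro K_tendsto conv) auto
    qed
  qed
  have "(\<lambda>n. integral {0..t} (\<lambda>\<tau>. q (w n \<tau>) + I (w n) \<tau> t)) \<longlonglongrightarrow> integral {0..t} (\<lambda>\<tau>. q (wl \<tau>) + I wl \<tau> t)"
  proof (rule dominated_convergence(2))
    show "(\<lambda>\<tau>. q (w n \<tau>) + I (w n) \<tau> t) integrable_on {0..t}" for n by (rule F_int[OF wn])
    show "(\<lambda>\<tau>. Q + 2 * M * sqrt t) integrable_on {0..t}" by (rule integrable_const_ivl)
    show "norm (q (w n \<tau>) + I (w n) \<tau> t) \<le> Q + 2 * M * sqrt t" if "\<tau> \<in> {0..t}" for n \<tau>
      using F_bound[OF wn[of n], of Q \<tau> t] Q that by auto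
    show "(\<lambda>n. q (w n \<tau>) + I (w n) \<tau> t) \<longlonglongrightarrow> q (wl \<tau>) + I wl \<tau> t" if "\<tau> \<in> {0..t}" for \<tau>
      using that by (intro tendsto_add Iconv isCont_tendsto_compose[OF qc] conv)
  qed
  then show ?thesis unfolding Phi_def by (intro tendsto_add tendsto_const)
qed

end

lemma om_mono2: "A \<le> A' \<Longrightarrow> B \<le> B' \<Longrightarrow> 0 \<le> d \<Longrightarrow> om A B d \<le> om A' B' d"
  unfolding om_def by (intro add_mono mult_right_mono) auto

context volt begin

definition "sol y0 y J \<longleftrightarrow> continuous_on J y \<and>
  (\<forall>t\<in>J. (\<forall>\<tau>\<in>{0..t}. (\<lambda>s. K (s - \<tau>) (y s) (y \<tau>)) integrable_on {\<tau>..t}) \<and>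
     ((\<lambda>\<tau>. q (y \<tau>) + integral {\<tau>..t} (\<lambda>s. K (s - \<tau>) (y s) (y \<tau>))) has_integral (y t - y0)) {0..t})"

lemma sol_Phi:
  assumes "sol y0 y J" "t \<in> J"
  shows "y t = Phi y0 y t"
proof -
  have "((\<lambda>\<tau>. q (y \<tau>) + I y \<tau> t) has_integral (y t - y0)) {0..t}"
    using assms unfolding sol_def I_def by auto
  then show ?thesis unfolding Phi_def by (simp add: integral_unique)
qed

lemma extend:
  assumes T: "T > 0" and sol: "sol y0 y {0..<T}" and bnd: "\<forall>t\<in>{0..<T}. norm (y t - y0) \<le> P"
  shows "\<exists>Tbar>T. \<exists>z. sol y0 z {0..Tbar} \<and> (\<forall>t\<in>{0..<T}. z t = y t)"
proof -
  have ycont: "continuous_on {0..<T} y" using sol unfolding sol_def by auto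
  have yPhi: "y t = Phi y0 y t" if "t \<in> {0..<T}" for t using sol_Phi[OF sol that] .
  obtain Q0 where Q0: "\<And>x. x \<in> cball y0 P \<Longrightarrow> norm (q x) \<le> Q0"
  proof -
    have "compact (q ` cball y0 P)"
      by (rule compact_continuous_image) (auto intro: continuous_on_subset[OF q_cont])
    then obtain B where "\<forall>x\<in>q ` cball y0 P. norm x \<le> B"
      using compact_imp_bounded bounded_iff by metis
    then show ?thesis using that[of B] by blast
  qed
  have yuc: "uniformly_continuous_on {0..<T} y"
  proof (rule mod_ucont[where A="Q0 + 2 * M * sqrt T" and B="2 * M * T"])
    fix t1 t2 assume t: "t1 \<in> {0..<T}" "t2 \<in> {0..<T}" "t1 \<le> t2"
    have "norm (y t2 - y t1) = norm (Phi y0 y t2 - Phi y0 y t1)" using yPhi t by simp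
    also have "\<dots> \<le> om (Q0 + 2 * M * sqrt t2) (2 * M * t2) (t2 - t1)"
    proof (rule Phi_modulus)
      have "{0..t2} \<subseteq> {0..<T}" using t by auto
      then show "continuous_on {0..t2} y" using continuous_on_subset[OF ycont] by blast
      show "norm (q (y \<tau>)) \<le> Q0" if "\<tau> \<in> {0..t2}" for \<tau>
        using Q0 bnd that t by (auto simp: dist_norm norm_minus_commute)
    qed (use t in auto)
    also have "\<dots> \<le> om (Q0 + 2 * M * sqrt T) (2 * M * T) (t2 - t1)"
      using t M_nonneg by (intro om_mono2 add_left_mono mult_left_mono) auto
    finally show "norm (y t2 - y t1) \<le> om (Q0 + 2 * M * sqrt T) (2 * M * T) (t2 - t1)" .
  qed
  obtain ys where ys_uc: "uniformly_continuous_on {0..T} ys" and ys_eq: "\<And>t. t \<in> {0..<T} \<Longrightarrow> y t = ys t"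
    and ys_uniq: "\<And>Y h x. {0..<T} \<subseteq> Y \<Longrightarrow> Y \<subseteq> {0..T} \<Longrightarrow> continuous_on Y h \<Longrightarrow>
        (\<And>x. x \<in> {0..<T} \<Longrightarrow> y x = h x) \<Longrightarrow> x \<in> Y \<Longrightarrow> h x = ys x"
  proof -
    from uniformly_continuous_on_extension_on_closure[OF yuc] obtain g where
      g1: "uniformly_continuous_on (closure {0..<T}) g" and g2: "\<And>x. x \<in> {0..<T} \<Longrightarrow> y x = g x"
      and g3: "\<And>Y h x. {0..<T} \<subseteq> Y \<Longrightarrow> Y \<subseteq> closure {0..<T} \<Longrightarrow> continuous_on Y h \<Longrightarrow>
        (\<And>x. x \<in> {0..<T} \<Longrightarrow> y x = h x) \<Longrightarrow> x \<in> Y \<Longrightarrow> h x = g x" by blast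
    have cl: "closure {0..<T} = {0..T}" using T by simp
    show ?thesis
    proof (rule that[of g])
      show "uniformly_continuous_on {0..T} g" using g1 unfolding cl .
      show "\<And>t. t \<in> {0..<T} \<Longrightarrow> y t = g t" by (rule g2)
      fix Y h x assume "{0..<T} \<subseteq> Y" "Y \<subseteq> {0..T}" "continuous_on Y h"
        "\<And>x. x \<in> {0..<T} \<Longrightarrow> y x = h x" "x \<in> Y"
      then show "h x = g x" using g3[of Y h x] unfolding cl by blast
    qed
  qed
  have ys_cont: "continuous_on {0..T} ys" using ys_uc uniformly_continuous_imp_continuous by blast
  define C0 where "C0 = ys ` {0..T} \<union> cball (ys T) 1"
  have C0c: "compact C0" unfolding C0_def
    by (intro compact_Un compact_continuous_image ys_cont) auto
  obtain Q where Q: "\<And>x. x \<in> C0 \<Longrightarrow> norm (q x) \<le> Q" and Qnn: "Q \<ge> 0"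
  proof -
    have "compact (q ` C0)"
      by (rule compact_continuous_image) (auto intro: continuous_on_subset[OF q_cont] C0c)
    then obtain B where "\<forall>x\<in>q ` C0. norm x \<le> B"
      using compact_imp_bounded bounded_iff by metis
    then show ?thesis using that[of "max B 0"] by force
  qed
  obtain B0 where B0: "\<And>x. x \<in> C0 \<Longrightarrow> norm x \<le> B0"
    using compact_imp_bounded[OF C0c] bounded_iff by metis
  define A where "A = Q + 2 * M * sqrt (T + 1)"
  define B where "B = 2 * M * (T + 1)"
  have AB: "A \<ge> 0" "B \<ge> 0" unfolding A_def B_def using Qnn M_nonneg T by auto
  obtain d where d: "d > 0" "\<And>x. 0 \<le> x \<Longrightarrow> x < d \<Longrightarrow> om A B x < 1"
    using om_small[of 1 A B] by auto
  define h where "h = min 1 (d / 2)"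
  have h: "h > 0" "h \<le> 1" "h < d" unfolding h_def using d by auto
  define Tm where "Tm = T + h"
  have Tm: "T < Tm" "Tm \<le> T + 1" unfolding Tm_def using h by auto
  define inS where "inS w \<longleftrightarrow> continuous_on {0..Tm} w \<and> (\<forall>t\<in>{0..T}. w t = ys t) \<and>
     (\<forall>t\<in>{T..Tm}. norm (w t - ys T) \<le> 1)" for w
  have inS_C0: "w t \<in> C0" if "inS w" "t \<in> {0..Tm}" for w t
  proof (cases "t \<le> T")
    case True then show ?thesis using that unfolding inS_def C0_def by auto
  next
    case False then show ?thesis using that unfolding inS_def C0_def
      by (auto simp: dist_norm norm_minus_commute)
  qed
  have inS_mod: "norm (Phi y0 w s1 - Phi y0 w s2) \<le> om A B \<bar>s1 - s2\<bar>"
    if w: "inS w" and s: "s1 \<in> {0..Tm}" "s2 \<in> {0..Tm}" for w s1 s2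
  proof -
    have mod1: "norm (Phi y0 w t2 - Phi y0 w t1) \<le> om A B (t2 - t1)"
      if t: "t1 \<in> {0..Tm}" "t2 \<in> {0..Tm}" "t1 \<le> t2" for t1 t2
    proof -
      have "norm (Phi y0 w t2 - Phi y0 w t1) \<le> om (Q + 2 * M * sqrt Tm) (2 * M * Tm) (t2 - t1)"
      proof (rule Phi_modulus)
        show "continuous_on {0..Tm} w" using w unfolding inS_def by auto
        show "norm (q (w \<tau>)) \<le> Q" if "\<tau> \<in> {0..Tm}" for \<tau> using Q inS_C0 w that by auto
      qed (use t in auto)
      also have "\<dots> \<le> om A B (t2 - t1)"
        unfolding A_def B_def using t Tm M_nonneg by (intro om_mono2 add_left_mono mult_left_mono) auto
      finally show ?thesis .
    qed
    show ?thesis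
    proof (cases "s2 \<le> s1")
      case True then show ?thesis using mod1[of s2 s1] s by auto
    next
      case False then show ?thesis using mod1[of s1 s2] s by (auto simp: norm_minus_commute)
    qed
  qed
  have inS_cont: "continuous_on {0..Tm} (Phi y0 w)" if wS: "inS w" for w
  proof -
    have "uniformly_continuous_on {0..Tm} (Phi y0 w)"
    proof (rule mod_ucont[where A=A and B=B])
      fix t1 t2 assume "t1 \<in> {0..Tm}" "t2 \<in> {0..Tm}" "t1 \<le> t2"
      then show "norm (Phi y0 w t2 - Phi y0 w t1) \<le> om A B (t2 - t1)"
        using inS_mod[OF wS, of t2 t1] by auto
    qed
    then show ?thesis using uniformly_continuous_imp_continuous by blast
  qed
  have inS_fix: "Phi y0 w t = ys t" if w: "inS w" and t: "t \<in> {0..T}" for w t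
  proof -
    have "Phi y0 w t = ys t" if t': "t \<in> {0..<T}" for t
    proof -
      have "Phi y0 w t = Phi y0 y t"
        by (rule Phi_dep) (use w t' ys_eq in \<open>auto simp: inS_def\<close>)
      then show ?thesis using yPhi[OF t'] ys_eq[OF t'] by simp
    qed
    moreover have "Phi y0 w x = ys x" if "x \<in> {0..T}" for x
    proof (rule ys_uniq[of "{0..T}"])
      show "continuous_on {0..T} (Phi y0 w)" using inS_cont[OF w] Tm by (auto intro: continuous_on_subset)
      show "y x = Phi y0 w x" if "x \<in> {0..<T}" for x
        using \<open>\<And>t. t \<in> {0..<T} \<Longrightarrow> Phi y0 w t = ys t\<close>[OF that] ys_eq[OF that] by simp
    qed (use that in auto)
    ultimately show ?thesis using t by blast
  qed
  define sg where "sg \<delta> t = max (min t T) (t - \<delta>)" for \<delta> t :: real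
  have sg_range: "sg \<delta> t \<in> {0..Tm}" if "\<delta> > 0" "t \<in> {0..Tm}" for \<delta> t
    using that Tm T unfolding sg_def by auto
  have sg_near: "\<bar>sg \<delta> t - t\<bar> \<le> \<delta>" if "\<delta> > 0" for \<delta> t
    using that unfolding sg_def by auto
  have sg_T: "sg \<delta> t = t" if "\<delta> > 0" "t \<le> T" for \<delta> t
    using that unfolding sg_def by auto
  have sg_lip: "\<bar>sg \<delta> t1 - sg \<delta> t2\<bar> \<le> \<bar>t1 - t2\<bar>" for \<delta> t1 t2
    unfolding sg_def by (auto simp: max_def min_def abs_if)
  have sg_cont: "continuous_on S (sg \<delta>)" for \<delta> S unfolding sg_def by (intro continuous_intros)
  define Psi where "Psi \<delta> w = (\<lambda>t. Phi y0 w (sg \<delta> t))" for \<delta> w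
  have Psi_inS: "inS (Psi \<delta> w)" if dpos: "\<delta> > 0" and w: "inS w" for \<delta> w
  proof -
    have c: "continuous_on {0..Tm} (Psi \<delta> w)" unfolding Psi_def
      by (rule continuous_on_compose2[OF inS_cont[OF w] sg_cont]) (use sg_range dpos in auto)
    have e1: "\<forall>t\<in>{0..T}. Psi \<delta> w t = ys t"
      using inS_fix[OF w] sg_T[OF dpos] unfolding Psi_def by auto
    have e2: "norm (Psi \<delta> w t - ys T) \<le> 1" if t: "t \<in> {T..Tm}" for t
    proof -
      have s: "sg \<delta> t \<in> {T..Tm}" using t Tm dpos unfolding sg_def by auto
      have "ys T = Phi y0 w T" using inS_fix[OF w, of T] T by auto
      then have "norm (Psi \<delta> w t - ys T) \<le> om A B \<bar>sg \<delta> t - T\<bar>"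
        using inS_mod[OF w, of "sg \<delta> t" T] s T Tm unfolding Psi_def by auto
      also have "\<dots> < 1" using d(2)[of "\<bar>sg \<delta> t - T\<bar>"] s h unfolding Tm_def by auto
      finally show ?thesis by simp
    qed
    show ?thesis unfolding inS_def using c e1 e2 by auto
  qed
  define w0 where "w0 t = ys (min t T)" for t
  have w0S: "inS w0"
  proof -
    have "continuous_on {0..Tm} w0" unfolding w0_def
      by (rule continuous_on_compose2[OF ys_cont]) (use T in \<open>auto intro!: continuous_intros\<close>)
    then show ?thesis unfolding inS_def w0_def by auto
  qed
  define u where "u \<delta> k = (Psi \<delta> ^^ k) w0" for \<delta> k
  have uSuc: "u \<delta> (Suc k) = Psi \<delta> (u \<delta> k)" for \<delta> k unfolding u_def by simp
  have uS: "inS (u \<delta> k)" if "\<delta> > 0" for \<delta> k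
    by (induction k) (use w0S Psi_inS that in \<open>auto simp: uSuc, simp add: u_def\<close>)
  have agree: "\<forall>t\<in>{0..Tm}. t \<le> T + real k * \<delta> \<longrightarrow> u \<delta> (Suc k) t = u \<delta> k t" if dpos: "\<delta> > 0" for \<delta> k
  proof (induction k)
    case 0
    show ?case using uS[OF dpos, of 0] uS[OF dpos, of 1] unfolding inS_def by auto
  next
    case (Suc k)
    show ?case
    proof (intro ballI impI)
      fix t assume t: "t \<in> {0..Tm}" "t \<le> T + real (Suc k) * \<delta>"
      have "0 \<le> real k * \<delta>" using dpos by simp
      then have a: "min t T \<le> T + real k * \<delta>" by (simp add: min_le_iff_disj)
      have b: "t - \<delta> \<le> T + real k * \<delta>" using t by (simp add: algebra_simps)
      have st: "sg \<delta> t \<le> T + real k * \<delta>" unfolding sg_def using a b by simp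
      have "Phi y0 (u \<delta> (Suc k)) (sg \<delta> t) = Phi y0 (u \<delta> k) (sg \<delta> t)"
      proof (rule Phi_dep)
        fix \<tau> assume "\<tau> \<in> {0..sg \<delta> t}"
        then show "u \<delta> (Suc k) \<tau> = u \<delta> k \<tau>"
          using Suc.IH st sg_range[OF dpos t(1)] by auto
      qed
      then show "u \<delta> (Suc (Suc k)) t = u \<delta> (Suc k) t"
        by (simp only: uSuc Psi_def)
    qed
  qed
  have fixp: "\<exists>v. inS v \<and> (\<forall>t\<in>{0..Tm}. v t = Phi y0 v (sg \<delta> t))" if dpos: "\<delta> > 0" for \<delta>
  proof -
    define k where "k = nat \<lceil>h / \<delta>\<rceil>"
    have "h / \<delta> \<le> real k" unfolding k_def by linarith
    then have kd: "h \<le> real k * \<delta>" using dpos by (simp add: field_simps)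
    show ?thesis
    proof (intro exI[of _ "u \<delta> k"] conjI ballI)
      show "inS (u \<delta> k)" by (rule uS[OF dpos])
      fix t assume t: "t \<in> {0..Tm}"
      then have "u \<delta> (Suc k) t = u \<delta> k t" using agree[OF dpos, of k] kd unfolding Tm_def by auto
      then show "u \<delta> k t = Phi y0 (u \<delta> k) (sg \<delta> t)" by (simp add: uSuc Psi_def)
    qed
  qed
  obtain vn where vnS: "\<And>n. inS (vn n)"
    and vnfix: "\<And>n t. t \<in> {0..Tm} \<Longrightarrow> vn n t = Phi y0 (vn n) (sg (1 / (real n + 1)) t)"
  proof -
    have "\<forall>n. \<exists>v. inS v \<and> (\<forall>t\<in>{0..Tm}. v t = Phi y0 v (sg (1 / (real n + 1)) t))"
      using fixp by auto
    then obtain vn where "\<forall>n. inS (vn n) \<and> (\<forall>t\<in>{0..Tm}. vn n t = Phi y0 (vn n) (sg (1 / (real n + 1)) t))"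
      by metis
    then show ?thesis using that by blast
  qed
  have vn_C0: "vn n x \<in> C0" if "x \<in> {0..Tm}" for n x using inS_C0[OF vnS that] .
  obtain g kk where gc: "continuous_on {0..Tm} g" and kk: "strict_mono (kk :: nat \<Rightarrow> nat)"
    and unif: "\<And>e. 0 < e \<Longrightarrow> \<exists>N. \<forall>n x. n \<ge> N \<and> x \<in> {0..Tm} \<longrightarrow> norm (vn (kk n) x - g x) < e"
  proof (rule Arzela_Ascoli[of "{0..Tm}" vn B0])
    show "compact {0..Tm}" by simp
    show "norm (vn n x) \<le> B0" if "x \<in> {0..Tm}" for n x using B0 vn_C0 that by auto
    fix x e assume x: "x \<in> {0..Tm}" and e: "(0::real) < e"
    obtain d' where d': "d' > 0" "\<And>z. 0 \<le> z \<Longrightarrow> z < d' \<Longrightarrow> om A B z < e" using om_small[OF e] by blast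
    show "\<exists>d. 0 < d \<and> (\<forall>n y. y \<in> {0..Tm} \<and> norm (x - y) < d \<longrightarrow> norm (vn n x - vn n y) < e)"
    proof (intro exI[of _ d'] conjI allI impI)
      fix n y assume y: "y \<in> {0..Tm} \<and> norm (x - y) < d'"
      define \<delta> where "\<delta> = 1 / (real n + 1)"
      have dp: "\<delta> > 0" unfolding \<delta>_def by auto
      have "norm (vn n x - vn n y) = norm (Phi y0 (vn n) (sg \<delta> x) - Phi y0 (vn n) (sg \<delta> y))"
        using vnfix x y unfolding \<delta>_def by auto
      also have "\<dots> \<le> om A B \<bar>sg \<delta> x - sg \<delta> y\<bar>"
        using inS_mod[OF vnS] sg_range[OF dp] x y by auto
      also have "\<dots> \<le> om A B \<bar>x - y\<bar>" using AB sg_lip by (intro om_mono) auto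
      also have "\<dots> < e" using d'(2)[of "\<bar>x - y\<bar>"] y by auto
      finally show "norm (vn n x - vn n y) < e" .
    qed (use d' in auto)
  qed blast
  have gconv: "(\<lambda>n. vn (kk n) x) \<longlonglongrightarrow> g x" if x: "x \<in> {0..Tm}" for x
    unfolding LIMSEQ_iff using unif x by metis
  have g_ys: "g t = ys t" if t: "t \<in> {0..T}" for t
  proof -
    have "(\<lambda>n. vn (kk n) t) = (\<lambda>n. ys t)" using vnS t unfolding inS_def by auto
    then have "(\<lambda>n. vn (kk n) t) \<longlonglongrightarrow> ys t" by simp
    moreover have "t \<in> {0..Tm}" using t Tm by auto
    ultimately show ?thesis using gconv LIMSEQ_unique by blast
  qed
  have g_C0: "g t \<in> C0" if t: "t \<in> {0..Tm}" for t
    by (rule Lim_in_closed_set[OF compact_imp_closed[OF C0c] _ _ gconv[OF t]])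
       (use vn_C0 t in auto)
  have g_fix: "g t = Phi y0 g t" if t: "t \<in> {0..Tm}" for t
  proof -
    have sub: "{0..t} \<subseteq> {0..Tm}" using t by auto
    have L1: "(\<lambda>n. Phi y0 (vn (kk n)) t) \<longlonglongrightarrow> Phi y0 g t"
    proof (rule Phi_tendsto)
      show "continuous_on {0..t} (vn (kk n))" for n
        using vnS[of "kk n"] continuous_on_subset[OF _ sub] unfolding inS_def by blast
      show "continuous_on {0..t} g" using continuous_on_subset[OF gc sub] .
      show "(\<lambda>n. vn (kk n) \<tau>) \<longlonglongrightarrow> g \<tau>" if "\<tau> \<in> {0..t}" for \<tau> using gconv sub that by auto
      show "norm (q (vn (kk n) \<tau>)) \<le> Q" if "\<tau> \<in> {0..t}" for n \<tau> using Q vn_C0 sub that by auto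
    qed
    have dl: "(\<lambda>n. 1 / (real (kk n) + 1)) \<longlonglongrightarrow> 0"
    proof -
      have "(\<lambda>n. inverse (real (Suc n))) \<longlonglongrightarrow> 0" by (rule LIMSEQ_inverse_real_of_nat)
      from LIMSEQ_subseq_LIMSEQ[OF this kk] show ?thesis by (simp add: o_def inverse_eq_divide add.commute)
    qed
    have omlim: "(\<lambda>n. om A B (1 / (real (kk n) + 1))) \<longlonglongrightarrow> 0"
    proof -
      have "(\<lambda>n. A * (1 / (real (kk n) + 1)) + B * sqrt (1 / (real (kk n) + 1))) \<longlonglongrightarrow> A * 0 + B * sqrt 0"
        by (intro tendsto_intros dl)
      then show ?thesis by (simp add: om_def)
    qed
    have L2: "(\<lambda>n. vn (kk n) t - Phi y0 (vn (kk n)) t) \<longlonglongrightarrow> 0"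
    proof (rule Lim_null_comparison[OF _ omlim], intro always_eventually allI)
      fix n
      define \<delta> where "\<delta> = 1 / (real (kk n) + 1)"
      have dp: "\<delta> > 0" unfolding \<delta>_def by auto
      have "norm (vn (kk n) t - Phi y0 (vn (kk n)) t) = norm (Phi y0 (vn (kk n)) (sg \<delta> t) - Phi y0 (vn (kk n)) t)"
        using vnfix t unfolding \<delta>_def by auto
      also have "\<dots> \<le> om A B \<bar>sg \<delta> t - t\<bar>" using inS_mod[OF vnS] sg_range[OF dp t] t by auto
      also have "\<dots> \<le> om A B \<delta>" using AB sg_near[OF dp] by (intro om_mono) auto
      finally show "norm (vn (kk n) t - Phi y0 (vn (kk n)) t) \<le> om A B (1 / (real (kk n) + 1))"
        unfolding \<delta>_def .
    qed
    have "(\<lambda>n. vn (kk n) t) \<longlonglongrightarrow> Phi y0 g t" by (rule Lim_transform[OF L1 L2])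
    then show ?thesis using gconv[OF t] LIMSEQ_unique by blast
  qed
  show ?thesis
  proof (intro exI[of _ Tm] conjI exI[of _ g])
    show "T < Tm" by (rule Tm(1))
    show "\<forall>t\<in>{0..<T}. g t = y t" using g_ys ys_eq by auto
    show "sol y0 g {0..Tm}" unfolding sol_def
    proof (intro conjI gc ballI)
      fix t assume t: "t \<in> {0..Tm}"
      have gt: "continuous_on {0..t} g" using continuous_on_subset[OF gc] t by auto
      show "(\<lambda>s. K (s - \<tau>) (g s) (g \<tau>)) integrable_on {\<tau>..t}" if "\<tau> \<in> {0..t}" for \<tau>
        by (rule inner_integrable) (use continuous_on_subset[OF gc] t that in auto)
      have "((\<lambda>\<tau>. q (g \<tau>) + I g \<tau> t) has_integral integral {0..t} (\<lambda>\<tau>. q (g \<tau>) + I g \<tau> t)) {0..t}"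
        using F_int[OF gt] by blast
      moreover have "integral {0..t} (\<lambda>\<tau>. q (g \<tau>) + I g \<tau> t) = g t - y0"
        using g_fix[OF t] unfolding Phi_def by simp
      ultimately show "((\<lambda>\<tau>. q (g \<tau>) + integral {\<tau>..t} (\<lambda>s. K (s - \<tau>) (g s) (g \<tau>))) has_integral (g t - y0)) {0..t}"
        unfolding I_def by simp
    qed
  qed
qed

end

lemma one_plus_sq_ne: "1 + x^2 / (R::real)^2 \<noteq> 0"
proof -
  have "0 \<le> x^2 / R^2" by (intro divide_nonneg_nonneg) auto
  then show ?thesis by linarith
qed

lemma qE_cont: "R > 0 \<Longrightarrow> continuous_on UNIV (qE \<beta> \<sigma> R :: 'n::finite state \<Rightarrow> 'n state)"
  unfolding qE_def[abs_def]
  by (intro continuous_intros) (auto simp: one_plus_sq_ne)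

lemma pcomp_cont:
  assumes D: "D > 0"
  shows "continuous_on {p. fst p > 0} (\<lambda>p. pcomp D R (fst p) (fst (snd p)) (snd (snd p)))"
proof -
  have "continuous_on {p::real \<times> real \<times> real. fst p > 0} (\<lambda>p. integral (cbox (-R) R) (\<lambda>w.
      exp (- ((snd (snd p) - w)^2 / (4 * fst p * D))) *
      (exp (- ((fst (snd p) - sqrt (R^2 - w^2))^2 / (4 * fst p * D)))
       - exp (- ((fst (snd p) + sqrt (R^2 - w^2))^2 / (4 * fst p * D))))))"
    by (rule integral_continuous_on_param) (use D in \<open>auto intro!: continuous_intros simp: split_beta\<close>)
  then show ?thesis unfolding pcomp_def by simp
qed


lemma pcomp_comp:
  assumes D: "D > 0" and c: "continuous_on S r" "continuous_on S a" "continuous_on S b"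
    and pos: "\<And>p. p \<in> S \<Longrightarrow> r p > 0"
  shows "continuous_on S (\<lambda>p. pcomp D R (r p) (a p) (b p))"
proof -
  have "continuous_on S (\<lambda>p. (\<lambda>p. pcomp D R (fst p) (fst (snd p)) (snd (snd p))) (r p, a p, b p))"
    by (rule continuous_on_compose2[OF pcomp_cont[OF D]]) (use c pos in \<open>auto intro!: continuous_intros\<close>)
  then show ?thesis by simp
qed

lemma KE_cont:
  assumes D: "D > 0"
  shows "continuous_on ({0<..} \<times> UNIV) (\<lambda>(r, x, z). CE \<gamma> \<xi> \<eta> D r *\<^sub>R pE D R r (x::'n::finite state) z)"
proof -
  define S where "S = ({0<..} \<times> UNIV :: (real \<times> 'n state \<times> 'n state) set)"
  have pos: "\<And>p. p \<in> S \<Longrightarrow> fst p > 0" unfolding S_def by auto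
  have tm: "continuous_on S (\<lambda>p. if k = 1
      then pcomp D R (fst p) ((snd (fst (snd p)) $ i - snd (snd (snd p)) $ j) $ 1) ((snd (fst (snd p)) $ i - snd (snd (snd p)) $ j) $ 2)
      else pcomp D R (fst p) ((snd (fst (snd p)) $ i - snd (snd (snd p)) $ j) $ 2) ((snd (fst (snd p)) $ i - snd (snd (snd p)) $ j) $ 1))"
    for i j and k :: 2
    by (cases "k = 1") (simp_all add: pcomp_comp[OF D] pos continuous_intros)
  have ce: "continuous_on S (\<lambda>p. CE \<gamma> \<xi> \<eta> D (fst p))"
    unfolding CE_def using pos D by (intro continuous_intros) (auto, fastforce)
  have "continuous_on S (\<lambda>p. CE \<gamma> \<xi> \<eta> D (fst p) *\<^sub>R pE D R (fst p) (fst (snd p)) (snd (snd p)))"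
    unfolding pE_def
    by (intro continuous_on_scaleR ce continuous_on_Pair continuous_on_vec_lambda continuous_on_sum tm continuous_on_const)
  then show ?thesis unfolding S_def by (simp add: case_prod_beta)
qed


lemma exp_neg_le: "(u::real) \<ge> 0 \<Longrightarrow> exp (- u) \<le> 1 / (1 + u)"
proof -
  assume u: "u \<ge> 0"
  have "1 + u \<le> exp u" by (rule exp_ge_add_one_self)
  then have "inverse (exp u) \<le> inverse (1 + u)" using u by (intro le_imp_inverse_le) auto
  then show ?thesis by (simp add: exp_minus inverse_eq_divide)
qed

lemma pcomp_bound:
  assumes D: "D > 0" and r: "r > 0" and R: "R > 0"
  shows "\<bar>pcomp D R r a b\<bar> \<le> pi * sqrt (4 * r * D)"
proof -
  define c where "c = 4 * r * D"
  have c: "c > 0" unfolding c_def using D r by auto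
  have sc: "sqrt c > 0" using c by auto
  define F where "F w = exp (- ((b - w)^2 / c)) *
      (exp (- ((a - sqrt (R^2 - w^2))^2 / c)) - exp (- ((a + sqrt (R^2 - w^2))^2 / c)))" for w
  define G where "G w = 1 / (1 + (b - w)^2 / c)" for w
  define H where "H w = - sqrt c * arctan ((b - w) / sqrt c)" for w
  have pc: "pcomp D R r a b = integral {-R..R} F" unfolding pcomp_def F_def c_def by simp
  have Fint: "F integrable_on {-R..R}"
    unfolding F_def by (rule integrable_continuous_interval) (use c in \<open>intro continuous_intros; auto\<close>)
  have Gint: "(G has_integral (H R - H (-R))) {-R..R}"
  proof (rule fundamental_theorem_of_calculus)
    show "-R \<le> R" using R by simp
    fix x assume x: "x \<in> {-R..R}"
    have "(H has_real_derivative (- sqrt c * (inverse (1 + ((b - x) / sqrt c)^2) * ((0 - 1) / sqrt c)))) (at x within {-R..R})"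
      unfolding H_def using c by (auto intro!: derivative_eq_intros simp: power2_eq_square abs_of_pos mult.assoc)
    moreover have "- sqrt c * (inverse (1 + ((b - x) / sqrt c)^2) * ((0 - 1) / sqrt c)) = G x"
    proof -
      have sq: "sqrt c * sqrt c = c" using c by simp
      have "((b - x) / sqrt c)^2 = (b - x)^2 / c" using sq by (simp add: power_divide power2_eq_square)
      moreover have "- sqrt c * (X * ((0 - 1) / sqrt c)) = X" for X
        using sc by simp
      ultimately show ?thesis unfolding G_def by (simp add: inverse_eq_divide)
    qed
    ultimately show "(H has_vector_derivative G x) (at x within {-R..R})"
      by (simp add: has_real_derivative_iff_has_vector_derivative)
  qed
  have FG: "norm (F w) \<le> G w" for w
  proof -
    have e1: "0 < exp (- ((a - sqrt (R^2 - w^2))^2 / c))" "exp (- ((a - sqrt (R^2 - w^2))^2 / c)) \<le> 1"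
      using c by auto
    have e2: "0 < exp (- ((a + sqrt (R^2 - w^2))^2 / c))" "exp (- ((a + sqrt (R^2 - w^2))^2 / c)) \<le> 1"
      using c by auto
    have d: "\<bar>exp (- ((a - sqrt (R^2 - w^2))^2 / c)) - exp (- ((a + sqrt (R^2 - w^2))^2 / c))\<bar> \<le> 1"
      using e1 e2 by linarith
    have "norm (F w) = exp (- ((b - w)^2 / c)) * \<bar>exp (- ((a - sqrt (R^2 - w^2))^2 / c)) - exp (- ((a + sqrt (R^2 - w^2))^2 / c))\<bar>"
      unfolding F_def by (simp add: abs_mult)
    also have "\<dots> \<le> exp (- ((b - w)^2 / c)) * 1" using d by (intro mult_left_mono) auto
    also have "\<dots> \<le> G w" unfolding G_def using exp_neg_le[of "(b - w)^2 / c"] c by simp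
    finally show ?thesis .
  qed
  have "\<bar>pcomp D R r a b\<bar> \<le> integral {-R..R} G"
    using integral_norm_bound_integral[OF Fint has_integral_integrable[OF Gint]] FG pc by simp
  also have "\<dots> = H R - H (-R)" using Gint by (rule integral_unique)
  also have "\<dots> = sqrt c * (arctan ((b + R) / sqrt c) - arctan ((b - R) / sqrt c))"
    unfolding H_def by (simp add: algebra_simps)
  also have "\<dots> \<le> sqrt c * pi"
  proof -
    have "arctan ((b + R) / sqrt c) < pi / 2" "- (pi / 2) < arctan ((b - R) / sqrt c)"
      using arctan_bounded by auto
    then show ?thesis using sc by (intro mult_left_mono) auto
  qed
  finally show ?thesis unfolding c_def by (simp add: mult.commute)
qed


lemma norm_vec_le_sum: "norm (v :: 'b::real_normed_vector ^ 'n) \<le> (\<Sum>i\<in>UNIV. norm (v $ i))"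
  unfolding norm_vec_def by (rule L2_set_le_sum) auto

lemma norm_vv_le: "norm (v :: real ^ 'm ^ 'n) \<le> (\<Sum>i\<in>UNIV. \<Sum>k\<in>UNIV. \<bar>v $ i $ k\<bar>)"
proof -
  have "norm v \<le> (\<Sum>i\<in>UNIV. norm (v $ i))" by (rule norm_vec_le_sum)
  also have "\<dots> \<le> (\<Sum>i\<in>UNIV. \<Sum>k\<in>UNIV. \<bar>v $ i $ k\<bar>)"
    by (intro sum_mono norm_le_l1_cart)
  finally show ?thesis .
qed

lemma CE_pcomp:
  assumes D: "D > 0" and r: "r > 0" and g: "\<gamma> > 0" "\<xi> > 0" and e: "\<eta> > 0"
  shows "CE \<gamma> \<xi> \<eta> D r * (pi * sqrt (4 * r * D)) \<le> \<gamma> * \<xi> / (2 * sqrt D) / sqrt r"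
proof -
  have sr: "sqrt r > 0" and sd: "sqrt D > 0" using r D by auto
  have s4: "sqrt (4 * r * D) = 2 * sqrt r * sqrt D" by (simp add: real_sqrt_mult)
  have rr: "r = sqrt r * sqrt r" and dd: "D = sqrt D * sqrt D" using r D by simp_all
  have ex: "exp (- \<eta> * r) \<le> 1" using e r by simp
  have "CE \<gamma> \<xi> \<eta> D r * (pi * sqrt (4 * r * D)) = \<gamma> * \<xi> * exp (- \<eta> * r) / (2 * sqrt D) / sqrt r"
    unfolding CE_def s4 using sr sd pi_gt_zero
    by (subst (1 2) rr, subst (1 2) dd) (simp add: field_simps)
  also have "\<dots> \<le> \<gamma> * \<xi> * 1 / (2 * sqrt D) / sqrt r"
    using ex g sr sd by (intro divide_right_mono mult_left_mono) auto
  finally show ?thesis by simp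
qed

lemma KE_bound:
  assumes D: "D > 0" and R: "R > 0" and g: "\<gamma> > 0" "\<xi> > 0" and e: "\<eta> > 0" and r: "r \<ge> 0"
  shows "norm (CE \<gamma> \<xi> \<eta> D r *\<^sub>R pE D R r (x::'n::finite state) z)
     \<le> (real CARD('n) * real CARD('n) * (\<gamma> * \<xi> / sqrt D)) / sqrt r"
proof (cases "r = 0")
  case True then show ?thesis by (simp add: CE_def)
next
  case False
  then have r: "r > 0" using r by auto
  define P0 where "P0 = pi * sqrt (4 * r * D)"
  have P0: "P0 \<ge> 0" unfolding P0_def using r D by auto
  define V :: "real^2^'n" where "V = (\<chi> i. \<chi> k. \<Sum>j\<in>UNIV.
         (if k = 1 then pcomp D R r ((snd x $ i - snd z $ j) $ 1) ((snd x $ i - snd z $ j) $ 2)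
          else pcomp D R r ((snd x $ i - snd z $ j) $ 2) ((snd x $ i - snd z $ j) $ 1)))"
  have pe: "pE D R r x z = (V, 0)" unfolding pE_def V_def by simp
  have comp: "\<bar>V $ i $ k\<bar> \<le> real CARD('n) * P0" for i k
  proof -
    have "\<bar>V $ i $ k\<bar> \<le> (\<Sum>j\<in>(UNIV::'n set). \<bar>(if k = 1 then pcomp D R r ((snd x $ i - snd z $ j) $ 1) ((snd x $ i - snd z $ j) $ 2)
          else pcomp D R r ((snd x $ i - snd z $ j) $ 2) ((snd x $ i - snd z $ j) $ 1))\<bar>)"
      unfolding V_def by (simp add: sum_abs)
    also have "\<dots> \<le> (\<Sum>j\<in>(UNIV::'n set). P0)"
      by (intro sum_mono) (auto simp: P0_def pcomp_bound[OF D r R])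
    finally show ?thesis by simp
  qed
  have "norm V \<le> (\<Sum>i\<in>UNIV. \<Sum>k\<in>UNIV. \<bar>V $ i $ k\<bar>)" by (rule norm_vv_le)
  also have "\<dots> \<le> (\<Sum>i\<in>(UNIV::'n set). \<Sum>k\<in>(UNIV::2 set). real CARD('n) * P0)"
    by (intro sum_mono comp)
  also have "\<dots> = real CARD('n) * (2 * (real CARD('n) * P0))" by simp
  finally have nV: "norm V \<le> real CARD('n) * (2 * (real CARD('n) * P0))" .
  have ce: "CE \<gamma> \<xi> \<eta> D r \<ge> 0" unfolding CE_def using g r D by auto
  have "norm (CE \<gamma> \<xi> \<eta> D r *\<^sub>R pE D R r x z) = CE \<gamma> \<xi> \<eta> D r * norm V"
    using ce by (simp add: pe norm_Pair)
  also have "\<dots> \<le> CE \<gamma> \<xi> \<eta> D r * (real CARD('n) * (2 * (real CARD('n) * P0)))"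
    by (rule mult_left_mono[OF nV ce])
  also have "\<dots> = real CARD('n) * real CARD('n) * 2 * (CE \<gamma> \<xi> \<eta> D r * P0)" by (simp add: algebra_simps)
  also have "\<dots> \<le> real CARD('n) * real CARD('n) * 2 * (\<gamma> * \<xi> / (2 * sqrt D) / sqrt r)"
    unfolding P0_def using CE_pcomp[OF D r g e] by (intro mult_left_mono) auto
  also have "\<dots> = (real CARD('n) * real CARD('n) * (\<gamma> * \<xi> / sqrt D)) / sqrt r" by (simp add: field_simps)
  finally show ?thesis .
qed

theorem proposition4p1:
  fixes \<beta> \<sigma> \<gamma> \<xi> \<eta> D R T P :: real
    and y0 :: "'n::finite state"
    and y :: "real \<Rightarrow> 'n state"
  assumes "\<beta> > 0" "\<sigma> > 0" "\<gamma> > 0" "\<xi> > 0" "\<eta> > 0" "D > 0" "R > 0"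
    and "T > 0"
    and "solves_E \<beta> \<sigma> \<gamma> \<xi> \<eta> D R y0 y {0..<T}"
    and "\<forall>t\<in>{0..<T}. norm (y t - y0) \<le> P"
  shows "\<exists>Tbar > T. \<exists>z :: real \<Rightarrow> 'n state.
           solves_E \<beta> \<sigma> \<gamma> \<xi> \<eta> D R y0 z {0..Tbar} \<and> (\<forall>t\<in>{0..<T}. z t = y t)"
proof -
  interpret V: volt "qE \<beta> \<sigma> R :: 'n state \<Rightarrow> 'n state" "\<lambda>r x z. CE \<gamma> \<xi> \<eta> D r *\<^sub>R pE D R r x z"
    "real CARD('n) * real CARD('n) * (\<gamma> * \<xi> / sqrt D)"
  proof
    show "continuous_on UNIV (qE \<beta> \<sigma> R :: 'n state \<Rightarrow> 'n state)" using qE_cont assms(7) by blast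
    show "continuous_on ({0<..} \<times> UNIV) (\<lambda>(r, x, z). CE \<gamma> \<xi> \<eta> D r *\<^sub>R pE D R r (x::'n state) z)"
      using KE_cont assms(6) by blast
    show "norm (CE \<gamma> \<xi> \<eta> D r *\<^sub>R pE D R r (x::'n state) z) \<le> real CARD('n) * real CARD('n) * (\<gamma> * \<xi> / sqrt D) / sqrt r"
      if "r \<ge> 0" for r x z using KE_bound[OF assms(6,7,3,4,5) that] by blast
    show "0 \<le> real CARD('n) * real CARD('n) * (\<gamma> * \<xi> / sqrt D)" using assms by auto
  qed
  have eq: "solves_E \<beta> \<sigma> \<gamma> \<xi> \<eta> D R y0 w J = V.sol y0 w J" for w J
    unfolding solves_E_def V.sol_def by simp
  show ?thesis using V.extend[OF assms(8)] assms(9,10) unfolding eq by blast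
qed

end
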